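(* If $(a_k)_{k\in\mathbb Z}\in l^1(\mathbb Z)$ satisfies $a_k=\frac12a_{3k-2}+a_{3k}+\frac12a_{3k+2}$ for all $k\in\mathbb Z$, then $a_k=0$ for all $k\neq0$. *)

theory Defs
  imports "HOL-Analysis.Analysis"
begin

end

theory Submission
  imports Defs
begin

lemma zero_not3:
  fixes a :: "int \<Rightarrow> real"
  assumes l1: "(\<lambda>k. \<bar>a k\<bar>) summable_on UNIV"
    and rec: "\<And>k. a k = a (3*k - 2) / 2 + a (3*k) + a (3*k + 2) / 2"
  shows "\<And>j. \<not> 3 dvd j \<Longrightarrow> a j = 0"
proof -
  define f where "f = (\<lambda>k. \<bar>a k\<bar>)"
  define A0 where "A0 = range (\<lambda>k::int. 3*k)"
  define A1 where "A1 = range (\<lambda>k::int. 3*k - 2)"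
  define A2 where "A2 = range (\<lambda>k::int. 3*k + 2)"
  have sf: "f summable_on B" for B using l1 unfolding f_def
    by (rule summable_on_subset_banach) auto
  have i0: "inj (\<lambda>k::int. 3*k)" by (auto simp: inj_def)
  have i1: "inj (\<lambda>k::int. 3*k - 2)" by (auto simp: inj_def)
  have i2: "inj (\<lambda>k::int. 3*k + 2)" by (auto simp: inj_def)
  have r0: "infsum (\<lambda>k. f (3*k)) UNIV = infsum f A0"
    unfolding A0_def using infsum_reindex[OF i0, of f] by (simp add: o_def)
  have r1: "infsum (\<lambda>k. f (3*k-2)) UNIV = infsum f A1"
    unfolding A1_def using infsum_reindex[OF i1, of f] by (simp add: o_def)
  have r2: "infsum (\<lambda>k. f (3*k+2)) UNIV = infsum f A2"
    unfolding A2_def using infsum_reindex[OF i2, of f] by (simp add: o_def)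
  have s0: "(\<lambda>k. f (3*k)) summable_on UNIV"
    using summable_on_reindex[OF i0, of f] sf by (simp add: o_def)
  have s1: "(\<lambda>k. f (3*k-2)) summable_on UNIV"
    using summable_on_reindex[OF i1, of f] sf by (simp add: o_def)
  have s2: "(\<lambda>k. f (3*k+2)) summable_on UNIV"
    using summable_on_reindex[OF i2, of f] sf by (simp add: o_def)
  have c0: "A0 = {x. x mod 3 = 0}"
  proof (intro set_eqI iffI)
    fix x assume "x \<in> A0" then show "x \<in> {x. x mod 3 = 0}" unfolding A0_def by auto
  next
    fix x :: int assume "x \<in> {x. x mod 3 = 0}"
    then have "x = 3 * (x div 3)" by auto
    then show "x \<in> A0" unfolding A0_def by (rule image_eqI) simp
  qed
  have c1: "A1 = {x. x mod 3 = 1}"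
  proof (intro set_eqI iffI)
    fix x assume "x \<in> A1" then obtain k::int where "x = 3*k-2" unfolding A1_def by auto
    then show "x \<in> {x. x mod 3 = 1}" by simp presburger
  next
    fix x :: int assume "x \<in> {x. x mod 3 = 1}"
    then have "x = 3 * (x div 3 + 1) - 2" by simp presburger
    then show "x \<in> A1" unfolding A1_def by (rule image_eqI) simp
  qed
  have c2: "A2 = {x. x mod 3 = 2}"
  proof (intro set_eqI iffI)
    fix x assume "x \<in> A2" then obtain k::int where "x = 3*k+2" unfolding A2_def by auto
    then show "x \<in> {x. x mod 3 = 2}" by simp
  next
    fix x :: int assume "x \<in> {x. x mod 3 = 2}"
    then have "x = 3 * (x div 3) + 2" by simp presburger
    then show "x \<in> A2" unfolding A2_def by (rule image_eqI) simp
  qed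
  have U: "UNIV = A0 \<union> (A1 \<union> A2)" unfolding c0 c1 c2 by auto
  have d1: "A0 \<inter> (A1 \<union> A2) = {}" unfolding c0 c1 c2 by auto
  have d2: "A1 \<inter> A2 = {}" unfolding c1 c2 by auto
  have S: "infsum f UNIV = infsum f A0 + infsum f A1 + infsum f A2"
    using infsum_Un_disjoint[OF sf sf d1] infsum_Un_disjoint[OF sf sf d2] U by simp
  have "infsum f UNIV \<le> infsum (\<lambda>k. (1/2) * f (3*k-2) + f (3*k) + (1/2) * f (3*k+2)) UNIV"
  proof (rule infsum_mono[OF sf])
    show "(\<lambda>k. (1/2) * f (3*k-2) + f (3*k) + (1/2) * f (3*k+2)) summable_on UNIV"
      by (intro summable_on_add summable_on_cmult_right s0 s1 s2)
    fix k :: int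
    show "f k \<le> (1/2) * f (3*k-2) + f (3*k) + (1/2) * f (3*k+2)"
      unfolding f_def by (subst rec[of k]) linarith
  qed
  also have "\<dots> = (1/2) * infsum f A1 + infsum f A0 + (1/2) * infsum f A2"
    apply (subst infsum_add)
      apply (intro summable_on_add summable_on_cmult_right s0 s1 s2)+
    apply (subst infsum_add)
      apply (intro summable_on_add summable_on_cmult_right s0 s1 s2)+
    apply (simp only: infsum_cmult_right' r0 r1 r2)
    done
  finally have le: "infsum f A1 + infsum f A2 \<le> 0" using S by simp
  have n1: "infsum f A1 \<ge> 0" "infsum f A2 \<ge> 0"
    by (auto intro!: infsum_nonneg simp: f_def)
  fix j :: int assume "\<not> 3 dvd j"
  then have "j \<in> A1 \<union> A2" using U unfolding c0 by auto
  then obtain B where B: "B = A1 \<or> B = A2" "j \<in> B" by auto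
  have "infsum f {j} \<le> infsum f B"
    by (rule infsum_mono_neutral[OF sf sf]) (use B in \<open>auto simp: f_def\<close>)
  then have "f j \<le> 0" using B le n1 by auto
  then show "a j = 0" by (simp add: f_def)
qed

theorem corollary3p6:
  fixes a :: "int \<Rightarrow> real"
  assumes l1: "(\<lambda>k. \<bar>a k\<bar>) summable_on UNIV"
    and rec: "\<And>k. a k = a (3*k - 2) / 2 + a (3*k) + a (3*k + 2) / 2"
  shows "\<forall>k. k \<noteq> 0 \<longrightarrow> a k = 0"
proof -
  have z: "\<And>j. \<not> 3 dvd j \<Longrightarrow> a j = 0" by (rule zero_not3[OF l1 rec])
  have a3: "a (3*k) = a k" for k
  proof -
    have "\<not> 3 dvd (3*k - 2)" "\<not> 3 dvd (3*k + 2)" by presburger+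
    then show ?thesis using rec[of k] z by simp
  qed
  have "k \<noteq> 0 \<longrightarrow> a k = 0" for k
  proof (induction "nat \<bar>k\<bar>" arbitrary: k rule: less_induct)
    case less
    show ?case
    proof (cases "3 dvd k")
      case True
      then obtain m where m: "k = 3*m" by auto
      show ?thesis
      proof
        assume "k \<noteq> 0"
        then have "m \<noteq> 0" "nat \<bar>m\<bar> < nat \<bar>k\<bar>" using m by auto
        then show "a k = 0" using less m a3 by auto
      qed
    qed (use z in auto)
  qed
  then show ?thesis by auto
qed

end
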